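(* Let $k$ be a field, $X$ a non-empty set, and for every $a\in X$ let $\sigma_a,\tau_a:X\to X$ be maps. Let ${\cal A}$ be the basic set-theoretic Yang–Baxter algebra associated with these data, i.e. the unital associative $k$-algebra generated by $1_{\cal A}$, $h_a$, $w_a$, $w_a^{-1}$ ($a\in X$) subject to the relations, for all $a,b\in X$, \[h_ah_b=\delta_{a,b}h_a,\quad w_a^{-1}w_a=w_aw_a^{-1}=1_{\cal A},\quad w_aw_b=w_{\sigma_a(b)}w_{\tau_b(a)},\quad w_ah_b=h_{\sigma_a(b)}w_a.\] Then for all $a,b,c\in X$, \[h_{\sigma_{\sigma_a(b)}(\sigma_{\tau_b(a)}(c))}=h_{\sigma_a(\sigma_b(c))}.\] If, in addition, $h_a=h_b$ implies $a=b$ for all $a,b\in X$, then for all $a,b,c\in X$, \[\sigma_a(\sigma_b(c))=\sigma_{\sigma_a(b)}(\sigma_{\tau_b(a)}(c)),\] and each $\sigma_a:X\to X$ is injective. *)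

theory Defs
  imports Main "HOL-Library.Poly_Mapping"
begin

text \<open>Words over an alphabet, as a (non-commutative) monoid under concatenation.
  The free unital associative k-algebra on an alphabet is then
  the type ('g word =>0 'k) with convolution product.\<close>

datatype 'g word = Word "'g list"

instantiation word :: (type) monoid_add
begin
definition zero_word :: "'g word" where "zero_word = Word []"
fun plus_word :: "'g word \<Rightarrow> 'g word \<Rightarrow> 'g word" where
  "plus_word (Word u) (Word v) = Word (u @ v)"
instance
proof
  fix a b c :: "'g word"
  show "a + b + c = a + (b + c)" by (cases a; cases b; cases c) simp
  show "0 + a = a" by (cases a) (simp add: zero_word_def)
  show "a + 0 = a" by (cases a) (simp add: zero_word_def)
qed
end

type_synonym ('g, 'k) free_alg = "'g word \<Rightarrow>\<^sub>0 'k"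

definition gen :: "'g \<Rightarrow> ('g, 'k::field) free_alg" where
  "gen g = Poly_Mapping.single (Word [g]) 1"

inductive_set two_sided_ideal :: "'a::ring_1 set \<Rightarrow> 'a set" for R where
  base: "r \<in> R \<Longrightarrow> r \<in> two_sided_ideal R"
| zero: "0 \<in> two_sided_ideal R"
| add: "x \<in> two_sided_ideal R \<Longrightarrow> y \<in> two_sided_ideal R \<Longrightarrow> x + y \<in> two_sided_ideal R"
| mult: "x \<in> two_sided_ideal R \<Longrightarrow> a * x * b \<in> two_sided_ideal R"

datatype 'x ybgen = H 'x | W 'x | Winv 'x

definition hA :: "'x \<Rightarrow> ('x ybgen, 'k::field) free_alg" where "hA a = gen (H a)"
definition wA :: "'x \<Rightarrow> ('x ybgen, 'k::field) free_alg" where "wA a = gen (W a)"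
definition wiA :: "'x \<Rightarrow> ('x ybgen, 'k::field) free_alg" where "wiA a = gen (Winv a)"

text \<open>Defining relations (as elements r, meaning r = 0), where
  sigma a b = sigma_a(b) and tau b a = tau_b(a).\<close>
definition yb_relations ::
  "('x \<Rightarrow> 'x \<Rightarrow> 'x) \<Rightarrow> ('x \<Rightarrow> 'x \<Rightarrow> 'x) \<Rightarrow> ('x ybgen, 'k::field) free_alg set" where
  "yb_relations sigma tau =
     {hA a * hA b - (if a = b then hA a else 0) | a b. True}
   \<union> {wiA a * wA a - 1 | a. True}
   \<union> {wA a * wiA a - 1 | a. True}
   \<union> {wA a * wA b - wA (sigma a b) * wA (tau b a) | a b. True}
   \<union> {wA a * hA b - hA (sigma a b) * wA a | a b. True}"

text \<open>The ideal of relations; the algebra A is the quotient of the free algebra by it.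
  Two elements are equal in A iff their difference lies in this ideal.\<close>
definition yb_ideal ::
  "('x \<Rightarrow> 'x \<Rightarrow> 'x) \<Rightarrow> ('x \<Rightarrow> 'x \<Rightarrow> 'x) \<Rightarrow> ('x ybgen, 'k::field) free_alg set" where
  "yb_ideal sigma tau = two_sided_ideal (yb_relations sigma tau)"

definition eqA ::
  "('x \<Rightarrow> 'x \<Rightarrow> 'x) \<Rightarrow> ('x \<Rightarrow> 'x \<Rightarrow> 'x) \<Rightarrow> ('x ybgen, 'k::field) free_alg \<Rightarrow> ('x ybgen, 'k) free_alg \<Rightarrow> bool" where
  "eqA sigma tau p q \<longleftrightarrow> p - q \<in> yb_ideal sigma tau"

end

theory Submission
  imports Defs
begin

lemma ideal_left: "x \<in> two_sided_ideal R \<Longrightarrow> a * x \<in> two_sided_ideal R"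
  using two_sided_ideal.mult[of x R a 1] by simp

lemma ideal_right: "x \<in> two_sided_ideal R \<Longrightarrow> x * b \<in> two_sided_ideal R"
  using two_sided_ideal.mult[of x R 1 b] by simp

lemma eqA_refl: "eqA s t p p"
  unfolding eqA_def yb_ideal_def by (simp add: two_sided_ideal.zero)

lemma eqA_sym: "eqA s t p q \<Longrightarrow> eqA s t q p"
  unfolding eqA_def yb_ideal_def
  using ideal_left[of "p - q" _ "-1"] by simp

lemma eqA_trans[trans]: "eqA s t p q \<Longrightarrow> eqA s t q r \<Longrightarrow> eqA s t p r"
  unfolding eqA_def yb_ideal_def
  using two_sided_ideal.add[of "p - q" _ "q - r"] by simp

lemma eqA_mult: "eqA s t p p' \<Longrightarrow> eqA s t q q' \<Longrightarrow> eqA s t (p * q) (p' * q')"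
proof -
  assume a: "eqA s t p p'" and b: "eqA s t q q'"
  have "p * q - p' * q' = p * (q - q') + (p - p') * q'" by (simp add: algebra_simps)
  moreover have "p * (q - q') \<in> yb_ideal s t" using b ideal_left unfolding eqA_def yb_ideal_def by blast
  moreover have "(p - p') * q' \<in> yb_ideal s t" using a ideal_right unfolding eqA_def yb_ideal_def by blast
  ultimately show ?thesis unfolding eqA_def yb_ideal_def using two_sided_ideal.add by metis
qed

lemma eqA_multL: "eqA s t q q' \<Longrightarrow> eqA s t (p * q) (p * q')"
  using eqA_mult eqA_refl by blast

lemma eqA_multR: "eqA s t p p' \<Longrightarrow> eqA s t (p * q) (p' * q)"
  using eqA_mult eqA_refl by blast

lemma eqA_rel: "p - q \<in> yb_relations s t \<Longrightarrow> eqA s t p q"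
  unfolding eqA_def yb_ideal_def by (rule two_sided_ideal.base)

lemma rel_wh: "eqA s t (wA a * hA b :: ('x ybgen, 'k::field) free_alg) (hA (s a b) * wA a)"
  by (rule eqA_rel) (auto simp: yb_relations_def)

lemma rel_ww: "eqA s t (wA a * wA b :: ('x ybgen, 'k::field) free_alg) (wA (s a b) * wA (t b a))"
  by (rule eqA_rel) (auto simp: yb_relations_def)

lemma rel_wwi: "eqA s t (wA a * wiA a :: ('x ybgen, 'k::field) free_alg) 1"
  by (rule eqA_rel) (auto simp: yb_relations_def)

lemma rel_wiw: "eqA s t (wiA a * wA a :: ('x ybgen, 'k::field) free_alg) 1"
  by (rule eqA_rel) (auto simp: yb_relations_def)

lemma part1:
  "eqA sigma tau (hA (sigma (sigma a b) (sigma (tau b a) c)) :: ('x ybgen, 'k::field) free_alg)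
            (hA (sigma a (sigma b c)))"
proof -
  define X :: "('x ybgen, 'k) free_alg" where "X = hA (sigma (sigma a b) (sigma (tau b a) c))"
  define Y :: "('x ybgen, 'k) free_alg" where "Y = hA (sigma a (sigma b c))"
  define W :: "('x ybgen, 'k) free_alg" where "W = wA a * wA b"
  define W' :: "('x ybgen, 'k) free_alg" where "W' = wA (sigma a b) * wA (tau b a)"
  define Wi :: "('x ybgen, 'k) free_alg" where "Wi = wiA b * wiA a"
  have WWi: "eqA sigma tau (W * Wi) 1"
  proof -
    have "W * Wi = wA a * (wA b * wiA b) * wiA a" unfolding W_def Wi_def by (simp add: mult.assoc)
    also have "eqA sigma tau \<dots> (wA a * 1 * wiA a)"
      by (intro eqA_multR eqA_multL rel_wwi)
    also have "wA a * 1 * wiA a = wA a * wiA a" by simp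
    also have "eqA sigma tau \<dots> 1" by (rule rel_wwi)
    finally show ?thesis .
  qed
  have WW': "eqA sigma tau W W'" unfolding W_def W'_def by (rule rel_ww)
  have YW: "eqA sigma tau (W * hA c) (Y * W)"
  proof -
    have "W * hA c = wA a * (wA b * hA c)" unfolding W_def by (simp add: mult.assoc)
    also have "eqA sigma tau \<dots> (wA a * (hA (sigma b c) * wA b))"
      by (intro eqA_multL rel_wh)
    also have "wA a * (hA (sigma b c) * wA b) = (wA a * hA (sigma b c)) * wA b" by (simp add: mult.assoc)
    also have "eqA sigma tau \<dots> ((Y * wA a) * wA b)"
      unfolding Y_def by (intro eqA_multR rel_wh)
    also have "(Y * wA a) * wA b = Y * W" unfolding W_def by (simp add: mult.assoc)
    finally show ?thesis .
  qed
  have XW: "eqA sigma tau (W * hA c) (X * W)"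
  proof -
    have "eqA sigma tau (W * hA c) (W' * hA c)" by (intro eqA_multR WW')
    also have "W' * hA c = wA (sigma a b) * (wA (tau b a) * hA c)" unfolding W'_def by (simp add: mult.assoc)
    also have "eqA sigma tau \<dots> (wA (sigma a b) * (hA (sigma (tau b a) c) * wA (tau b a)))"
      by (intro eqA_multL rel_wh)
    also have "wA (sigma a b) * (hA (sigma (tau b a) c) * wA (tau b a)) = (wA (sigma a b) * hA (sigma (tau b a) c)) * wA (tau b a)" by (simp add: mult.assoc)
    also have "eqA sigma tau \<dots> ((X * wA (sigma a b)) * wA (tau b a))"
      unfolding X_def by (intro eqA_multR rel_wh)
    also have "(X * wA (sigma a b)) * wA (tau b a) = X * W'" unfolding W'_def by (simp add: mult.assoc)
    also have "eqA sigma tau \<dots> (X * W)" by (intro eqA_multL eqA_sym[OF WW'])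
    finally show ?thesis .
  qed
  have "X = X * 1" by simp
  also have "eqA sigma tau \<dots> (X * (W * Wi))" by (intro eqA_multL eqA_sym[OF WWi])
  also have "X * (W * Wi) = (X * W) * Wi" by (simp add: mult.assoc)
  also have "eqA sigma tau \<dots> ((Y * W) * Wi)"
    by (rule eqA_multR) (rule eqA_trans[OF eqA_sym[OF XW] YW])
  also have "(Y * W) * Wi = Y * (W * Wi)" by (simp add: mult.assoc)
  also have "eqA sigma tau \<dots> (Y * 1)" by (intro eqA_multL WWi)
  also have "Y * 1 = Y" by simp
  finally have "eqA sigma tau X Y" .
  then show ?thesis by (simp only: X_def Y_def)
qed

lemma part_inj:
  assumes "sigma a b = sigma a c"
  shows "eqA sigma tau (hA b :: ('x ybgen, 'k::field) free_alg) (hA c)"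
proof -
  have "(hA b :: ('x ybgen, 'k) free_alg) = 1 * hA b" by simp
  also have "eqA sigma tau \<dots> ((wiA a * wA a) * hA b)" by (intro eqA_multR eqA_sym[OF rel_wiw])
  also have "(wiA a * wA a) * hA b = wiA a * (wA a * hA b)" by (simp add: mult.assoc)
  also have "eqA sigma tau \<dots> (wiA a * (hA (sigma a b) * wA a))" by (intro eqA_multL rel_wh)
  also have "wiA a * (hA (sigma a b) * wA a) = wiA a * (hA (sigma a c) * wA a)" using assms by simp
  also have "eqA sigma tau \<dots> (wiA a * (wA a * hA c))" by (intro eqA_multL eqA_sym[OF rel_wh])
  also have "wiA a * (wA a * hA c) = (wiA a * wA a) * hA c" by (simp add: mult.assoc)
  also have "eqA sigma tau \<dots> (1 * hA c)" by (intro eqA_multR rel_wiw)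
  also have "1 * hA c = (hA c :: ('x ybgen, 'k) free_alg)" by simp
  finally show ?thesis .
qed

theorem proposition2p2:
  fixes sigma tau :: "'x \<Rightarrow> 'x \<Rightarrow> 'x"
  shows "(\<forall>a b c. eqA sigma tau
            (hA (sigma (sigma a b) (sigma (tau b a) c)) :: ('x ybgen, 'k::field) free_alg)
            (hA (sigma a (sigma b c))))
    \<and> ((\<forall>a b. eqA sigma tau (hA a :: ('x ybgen, 'k) free_alg) (hA b) \<longrightarrow> a = b) \<longrightarrow>
         (\<forall>a b c. sigma a (sigma b c) = sigma (sigma a b) (sigma (tau b a) c))
         \<and> (\<forall>a. inj (sigma a)))"
proof (intro conjI allI impI)
  fix a b c
  show "eqA sigma tau
            (hA (sigma (sigma a b) (sigma (tau b a) c)) :: ('x ybgen, 'k::field) free_alg)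
            (hA (sigma a (sigma b c)))" by (rule part1)
next
  fix a b c
  assume H: "\<forall>a b. eqA sigma tau (hA a :: ('x ybgen, 'k) free_alg) (hA b) \<longrightarrow> a = b"
  show "sigma a (sigma b c) = sigma (sigma a b) (sigma (tau b a) c)"
    using H eqA_sym[OF part1[where sigma=sigma and tau=tau and a=a and b=b and c=c]] by blast
next
  fix a
  assume H: "\<forall>a b. eqA sigma tau (hA a :: ('x ybgen, 'k) free_alg) (hA b) \<longrightarrow> a = b"
  show "inj (sigma a)"
  proof (rule injI)
    fix x y assume "sigma a x = sigma a y"
    then have "eqA sigma tau (hA x :: ('x ybgen, 'k) free_alg) (hA y)" by (rule part_inj)
    then show "x = y" using H by blast
  qed
qed

end
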